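(* Let $\ell\in\mathbb R^r$ be a generic length vector with positive, weakly increasing coordinates. If there is an $\ell$-long subset $J\subset[r]$ with $\#J=\mu(\ell)$, then $\ell$ is equivalent to the length vector $(0,\dots,0,1,\dots,1)$ whose last $2\mu(\ell)-1$ coordinates equal $1$ and whose first $r-2\mu(\ell)+1$ coordinates equal $0$.
   Context: $[r]=\{1,\dots,r\}$. A length vector $\ell\in\mathbb R^r$ is generic if $\sum_{j\in J}\ell_j\ne\sum_{j\notin J}\ell_j$ for every $J\subset[r]$; $J$ is $\ell$-long if $\sum_{j\in J}\ell_j>\sum_{j\notin J}\ell_j$ and $\ell$-short otherwise. Two generic length vectors are equivalent ($\sim$) if they have the same long (equivalently, short) subsets. $\sigma_\ell(J)=\#\{j\in J: J\setminus\{j\}\text{ is }\ell\text{-short}\}$ and $\mu(\ell)=\min\{\sigma_\ell(J): J\text{ }\ell\text{-long},\ \sigma_\ell(J)>0\}$. *)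

theory Defs
  imports Complex_Main
begin

text \<open>Length vectors in R^r are functions nat => real, only indices 1..r matter.\<close>

definition long_set :: "nat \<Rightarrow> (nat \<Rightarrow> real) \<Rightarrow> nat set \<Rightarrow> bool" where
  "long_set r l J \<longleftrightarrow> (\<Sum>j\<in>J. l j) > (\<Sum>j\<in>{1..r} - J. l j)"

definition short_set :: "nat \<Rightarrow> (nat \<Rightarrow> real) \<Rightarrow> nat set \<Rightarrow> bool" where
  "short_set r l J \<longleftrightarrow> \<not> long_set r l J"

definition generic :: "nat \<Rightarrow> (nat \<Rightarrow> real) \<Rightarrow> bool" where
  "generic r l \<longleftrightarrow> (\<forall>J. J \<subseteq> {1..r} \<longrightarrow> (\<Sum>j\<in>J. l j) \<noteq> (\<Sum>j\<in>{1..r} - J. l j))"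

definition equiv_lv :: "nat \<Rightarrow> (nat \<Rightarrow> real) \<Rightarrow> (nat \<Rightarrow> real) \<Rightarrow> bool" where
  "equiv_lv r l l' \<longleftrightarrow> generic r l \<and> generic r l' \<and>
     (\<forall>J. J \<subseteq> {1..r} \<longrightarrow> (long_set r l J \<longleftrightarrow> long_set r l' J))"

definition sigma_lv :: "nat \<Rightarrow> (nat \<Rightarrow> real) \<Rightarrow> nat set \<Rightarrow> nat" where
  "sigma_lv r l J = card {j \<in> J. short_set r l (J - {j})}"

definition mu_lv :: "nat \<Rightarrow> (nat \<Rightarrow> real) \<Rightarrow> nat" where
  "mu_lv r l = Min {sigma_lv r l J | J. J \<subseteq> {1..r} \<and> long_set r l J \<and> sigma_lv r l J > 0}"

text \<open>The vector (0,..,0,1,..,1) with last 2m-1 coordinates 1 and first r-2m+1 coordinates 0: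
  index i is 1 iff i >= r - 2m + 2.\<close>
definition zero_one_lv :: "nat \<Rightarrow> nat \<Rightarrow> (nat \<Rightarrow> real)" where
  "zero_one_lv r m = (\<lambda>i. if r + 2 \<le> i + 2 * m then 1 else 0)"

end

theory Submission
  imports Defs
begin

lemma top_sum:
  fixes l :: "nat \<Rightarrow> real"
  assumes mono: "\<forall>i j. 1 \<le> i \<and> i \<le> j \<and> j \<le> r \<longrightarrow> l i \<le> l j"
  shows "n \<le> r \<Longrightarrow> A \<subseteq> {1..n} \<Longrightarrow> sum l A \<le> sum l {n+1-card A..n}"
proof (induction n arbitrary: A)
  case 0
  then have "A = {}" by auto
  then show ?case by simp
next
  case (Suc n)
  have finA: "finite A" using Suc.prems(2) finite_subset by blast
  have cA: "card A \<le> Suc n" using card_mono[OF _ Suc.prems(2)] by simp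
  show ?case
  proof (cases "Suc n \<in> A")
    case True
    let ?A = "A - {Suc n}"
    have s: "?A \<subseteq> {1..n}" using Suc.prems(2) by auto
    have c: "card ?A = card A - 1" using True finA by simp
    have c1: "card A \<ge> 1" using True finA card_0_eq by fastforce
    have ih: "sum l ?A \<le> sum l {n+1-card ?A..n}" using Suc.IH[OF _ s] Suc.prems(1) by simp
    have e: "{Suc n+1-card A..Suc n} = insert (Suc n) {n+1-card ?A..n}" using c c1 cA by auto
    have "sum l A = l (Suc n) + sum l ?A" using True finA by (simp add: sum.remove)
    also have "\<dots> \<le> l (Suc n) + sum l {n+1-card ?A..n}" using ih by simp
    also have "\<dots> = sum l {Suc n+1-card A..Suc n}" unfolding e by simp
    finally show ?thesis .
  next
    case False
    have s: "A \<subseteq> {1..n}" using Suc.prems(2) False by (force simp: subset_iff le_Suc_eq)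
    have cA2: "card A \<le> n" using card_mono[OF _ s] by simp
    have ih: "sum l A \<le> sum l {n+1-card A..n}" using Suc.IH[OF _ s] Suc.prems(1) by simp
    have "sum l {n+1-card A..n} \<le> (\<Sum>i = n+1-card A..n. l (Suc i))"
      apply (rule sum_mono) using mono Suc.prems(1) cA2 by auto
    also have "\<dots> = sum l {Suc (n+1-card A)..Suc n}" by (rule sum.shift_bounds_cl_Suc_ivl[symmetric])
    also have "{Suc (n+1-card A)..Suc n} = {Suc n+1-card A..Suc n}" using cA2 by (simp add: Suc_diff_le)
    finally show ?thesis using ih by simp
  qed
qed


lemma long_iff_gen: "K \<subseteq> {1..r} \<Longrightarrow> long_set r g K \<longleftrightarrow> 2 * sum g K > sum g {1..r}"
proof -
  assume K: "K \<subseteq> {1..r}"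
  have "sum g ({1..r} - K) = sum g {1..r} - sum g K" by (rule sum_diff) (use K in auto)
  then show ?thesis unfolding long_set_def by linarith
qed

lemma generic_iff_gen: "generic r g \<longleftrightarrow> (\<forall>K. K \<subseteq> {1..r} \<longrightarrow> 2 * sum g K \<noteq> sum g {1..r})"
proof -
  have "\<And>K. K \<subseteq> {1..r} \<Longrightarrow> (sum g K \<noteq> sum g ({1..r} - K)) = (2 * sum g K \<noteq> sum g {1..r})"
  proof -
    fix K assume K: "K \<subseteq> {1..r}"
    have e: "sum g ({1..r} - K) = sum g {1..r} - sum g K" by (rule sum_diff) (use K in auto)
    show "(sum g K \<noteq> sum g ({1..r} - K)) = (2 * sum g K \<noteq> sum g {1..r})" unfolding e by linarith
  qed
  then show ?thesis unfolding generic_def by blast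
qed

theorem lemma4p1:
  fixes r :: nat and l :: "nat \<Rightarrow> real"
  assumes "generic r l"
    and "\<forall>i\<in>{1..r}. l i > 0"
    and "\<forall>i j. 1 \<le> i \<and> i \<le> j \<and> j \<le> r \<longrightarrow> l i \<le> l j"
    and "\<exists>J. J \<subseteq> {1..r} \<and> long_set r l J \<and> card J = mu_lv r l"
  shows "equiv_lv r l (zero_one_lv r (mu_lv r l))"
proof -
  note gen0 = assms(1) and posl = assms(2) and mono = assms(3)
  obtain J where J: "J \<subseteq> {1..r}" "long_set r l J" "card J = mu_lv r l" using assms(4) by blast
  define m where "m = mu_lv r l"
  define tot where "tot = sum l {1..r}"
  have pos: "\<And>i. i \<in> {1..r} \<Longrightarrow> 0 \<le> l i" using posl by fastforce
  have compl: "\<And>K. K \<subseteq> {1..r} \<Longrightarrow> sum l ({1..r} - K) = tot - sum l K"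
    unfolding tot_def by (rule sum_diff) auto
  have longI: "\<And>K. K \<subseteq> {1..r} \<Longrightarrow> long_set r l K \<longleftrightarrow> 2 * sum l K > tot"
  proof -
    fix K assume K: "K \<subseteq> {1..r}"
    show "long_set r l K \<longleftrightarrow> 2 * sum l K > tot" unfolding long_set_def compl[OF K] by linarith
  qed
  have gen: "\<And>K. K \<subseteq> {1..r} \<Longrightarrow> 2 * sum l K \<noteq> tot"
  proof -
    fix K assume K: "K \<subseteq> {1..r}"
    have "sum l K \<noteq> sum l ({1..r} - K)" using gen0 K unfolding generic_def by blast
    then show "2 * sum l K \<noteq> tot" unfolding compl[OF K] by linarith
  qed
  have finS: "finite {sigma_lv r l J | J. J \<subseteq> {1..r} \<and> long_set r l J \<and> sigma_lv r l J > 0}"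
    by (rule finite_subset[of _ "sigma_lv r l ` Pow {1..r}"]) auto
  have muI: "\<And>K. K \<subseteq> {1..r} \<Longrightarrow> long_set r l K \<Longrightarrow> sigma_lv r l K > 0 \<Longrightarrow> m \<le> sigma_lv r l K"
    unfolding m_def mu_lv_def by (rule Min_le[OF finS]) blast
  have nonempty: "\<And>K. K \<subseteq> {1..r} \<Longrightarrow> long_set r l K \<Longrightarrow> K \<noteq> {}"
  proof
    fix K assume K: "K \<subseteq> {1..r}" "long_set r l K" "K = {}"
    have "0 \<le> tot" unfolding tot_def by (rule sum_nonneg) (rule pos)
    then show False using longI[OF K(1)] K by simp
  qed
  have F1: "\<And>K. K \<subseteq> {1..r} \<Longrightarrow> long_set r l K \<Longrightarrow> m \<le> card K"
  proof -
    have "\<forall>K. card K = n \<longrightarrow> K \<subseteq> {1..r} \<longrightarrow> long_set r l K \<longrightarrow> m \<le> card K" for n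
    proof (induction n rule: less_induct)
      case (less n)
      show ?case
      proof (intro allI impI)
        fix K assume K: "card K = n" "K \<subseteq> {1..r}" "long_set r l K"
        have finK: "finite K" using K(2) finite_subset by blast
        show "m \<le> card K"
        proof (cases "\<exists>j\<in>K. long_set r l (K - {j})")
          case True
          then obtain j where j: "j \<in> K" "long_set r l (K - {j})" by blast
          have "card (K - {j}) < n" unfolding K(1)[symmetric] by (rule card_Diff1_less[OF finK j(1)])
          moreover have "K - {j} \<subseteq> {1..r}" using K(2) by blast
          ultimately have "m \<le> card (K - {j})" using less.IH j(2) by blast
          then show ?thesis using j finK by (simp add: card_Diff1_le le_trans)
        next
          case False
          then have "{j \<in> K. short_set r l (K - {j})} = K" unfolding short_set_def by auto
          then have "sigma_lv r l K = card K" unfolding sigma_lv_def by simp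
          moreover have "card K > 0" using nonempty[OF K(2,3)] finK by (simp add: card_gt_0_iff)
          ultimately show ?thesis using muI[OF K(2,3)] by simp
        qed
      qed
    qed
    then show "\<And>K. K \<subseteq> {1..r} \<Longrightarrow> long_set r l K \<Longrightarrow> m \<le> card K" by blast
  qed
  have finJ: "finite J" using J(1) finite_subset by blast
  have m1: "m \<ge> 1" proof -
    have "card J > 0" using nonempty[OF J(1,2)] finJ by (simp add: card_gt_0_iff)
    then show ?thesis using J(3) m_def by simp
  qed
  have mr: "m \<le> r" using card_mono[OF _ J(1)] J(3) m_def by simp
  have r2m: "2*m \<le> r+1"
  proof (rule ccontr)
    assume "\<not> 2*m \<le> r+1"
    define A where "A = {1..m-1}"
    have A: "A \<subseteq> {1..r}" using mr unfolding A_def by auto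
    have "\<not> long_set r l A" using F1[OF A] m1 unfolding A_def by auto
    then have a1: "2 * sum l A \<le> tot" using longI[OF A] by simp
    have Ac: "{1..r} - A \<subseteq> {1..r}" by auto
    have "{1..r} - A = {m..r}" unfolding A_def using m1 by auto
    then have "card ({1..r} - A) < m" using \<open>\<not> 2*m \<le> r+1\<close> by simp
    then have "\<not> long_set r l ({1..r} - A)" using F1[OF Ac] by fastforce
    then have "2 * (tot - sum l A) \<le> tot" using longI[OF Ac] compl[OF A] by simp
    then show False using a1 gen[OF A] by simp
  qed
  define a where "a = r + 2 - 2*m"
  have a1: "a \<ge> 1" and ar: "a + 2*m = r + 2" using r2m m1 unfolding a_def by auto
  define C where "C k = {a+k..a+k+m-1}" for k
  have Csub: "\<And>k. k \<le> m - 1 \<Longrightarrow> C k \<subseteq> {1..r}" unfolding C_def using a1 ar by auto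
  have Tlong: "long_set r l (C (m-1))"
  proof -
    have "sum l J \<le> sum l {r+1-card J..r}" using top_sum[OF mono _ J(1)] by simp
    also have "{r+1-card J..r} = C (m-1)" unfolding C_def using J(3) m_def ar m1 by auto
    finally show ?thesis using J(2) longI[OF J(1)] longI[OF Csub] by fastforce
  qed
  have C0long: "long_set r l (C 0)"
  proof (rule ccontr)
    assume C0: "\<not> long_set r l (C 0)"
    have "\<exists>k < m - 1. \<not> long_set r l (C k) \<and> long_set r l (C (Suc k))"
    proof (rule ccontr)
      assume H: "\<not> ?thesis"
      have "k \<le> m - 1 \<Longrightarrow> \<not> long_set r l (C k)" for k
        by (induction k) (use C0 H in \<open>auto simp: Suc_le_eq\<close>)
      then show False using Tlong by blast
    qed
    then obtain k where k: "k < m - 1" "\<not> long_set r l (C k)" "long_set r l (C (Suc k))" by blast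
    define Z where "Z = {1..r} - {a+k+1..a+k+m-1}"
    have Zs: "Z \<subseteq> {1..r}" unfolding Z_def by auto
    have finZ: "finite Z" using Zs finite_subset by blast
    have Z1: "Z - {a+k} = {1..r} - C k" unfolding Z_def C_def using m1 by auto
    have Z2: "Z - {a+k+m} = {1..r} - C (Suc k)" unfolding Z_def C_def using m1 by auto
    have akZ: "a+k \<in> Z" and akmZ: "a+k+m \<in> Z" unfolding Z_def using a1 ar k(1) by auto
    have c1: "2 * sum l (C k) < tot" using k(2) longI[OF Csub] gen[OF Csub] k(1)
      by (metis less_imp_le_nat linorder_neqE_linordered_idom)
    have c2: "2 * sum l (C (Suc k)) > tot" using k(3) longI[OF Csub] k(1) by simp
    have e1: "sum l (Z - {a+k}) = tot - sum l (C k)" using Z1 compl[OF Csub] k(1) by simp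
    have e2: "sum l (Z - {a+k+m}) = tot - sum l (C (Suc k))" using Z2 compl[OF Csub] k(1) by simp
    have rem: "\<And>j. j \<in> Z \<Longrightarrow> sum l (Z - {j}) = sum l Z - l j" using finZ by (simp add: sum_diff1)
    have lak: "0 \<le> l (a+k)" using pos akZ Zs by blast
    have Zlong: "long_set r l Z" using longI[OF Zs] rem[OF akZ] e1 c1 lak by simp
    have sub: "{j \<in> Z. short_set r l (Z - {j})} \<subseteq> {a+k+m..r}"
    proof
      fix j assume j: "j \<in> {j \<in> Z. short_set r l (Z - {j})}"
      have jr: "j \<in> {1..r}" using j Zs by blast
      show "j \<in> {a+k+m..r}"
      proof (rule ccontr)
        assume "j \<notin> {a+k+m..r}"
        then have "j \<le> a+k" using j jr unfolding Z_def by auto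
        moreover have "a+k \<le> r" using akZ Zs by auto
        ultimately have "l j \<le> l (a+k)" using mono jr by auto
        then have "2 * sum l (Z - {j}) > tot" using rem[of j] rem[OF akZ] j e1 c1 by simp
        then show False using j longI[of "Z - {j}"] Zs unfolding short_set_def by auto
      qed
    qed
    have mem: "a+k+m \<in> {j \<in> Z. short_set r l (Z - {j})}"
      using akmZ e2 c2 longI[of "Z - {a+k+m}"] Zs unfolding short_set_def by auto
    have sg: "sigma_lv r l Z \<le> m - 1 - k" unfolding sigma_lv_def
      using card_mono[OF _ sub] ar by simp
    have "sigma_lv r l Z > 0" unfolding sigma_lv_def using mem finZ
      by (metis (no_types, lifting) card_gt_0_iff empty_iff finite_subset mem_Collect_eq subsetI)
    then have "m \<le> sigma_lv r l Z" using muI[OF Zs Zlong] by simp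
    then show False using sg m1 by simp
  qed
  have c0: "2 * sum l (C 0) > tot" using C0long longI[OF Csub] by simp
  define T where "T = {a..r}"
  define U where "U = {a+m..r}"
  have cT: "card T = 2*m - 1" unfolding T_def using ar by simp
  have dom: "\<And>K. K \<subseteq> {1..r} \<Longrightarrow> card (K \<inter> T) \<le> m - 1 \<Longrightarrow> 2 * sum l K < tot"
  proof -
    fix K assume K: "K \<subseteq> {1..r}" "card (K \<inter> T) \<le> m - 1"
    have finK: "finite K" using K(1) finite_subset by blast
    have split: "sum l K = sum l (K \<inter> T) + sum l (K - T)" by (rule sum.Int_Diff[OF finK])
    have b1: "sum l (K - T) \<le> sum l {1..a-1}"
      by (rule sum_mono2) (use K(1) a1 ar m1 in \<open>auto simp: T_def intro!: pos\<close>)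
    have KT: "K \<inter> T \<subseteq> {1..r}" using K(1) by blast
    have b2: "sum l (K \<inter> T) \<le> sum l {r+1-card (K \<inter> T)..r}" using top_sum[OF mono _ KT] by simp
    have b3: "sum l {r+1-card (K \<inter> T)..r} \<le> sum l U"
      by (rule sum_mono2) (use K(2) ar m1 in \<open>auto simp: U_def intro!: pos\<close>)
    have d: "{1..r} - C 0 = {1..a-1} \<union> U" unfolding C_def U_def using a1 ar m1 by auto
    have "sum l ({1..a-1} \<union> U) = sum l {1..a-1} + sum l U"
      by (rule sum.union_disjoint) (use a1 in \<open>auto simp: U_def\<close>)
    then have "tot - sum l (C 0) = sum l {1..a-1} + sum l U" using compl[OF Csub[of 0]] d by simp
    then show "2 * sum l K < tot" using split b1 b2 b3 c0 by linarith
  qed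
  have Tsub: "T \<subseteq> {1..r}" unfolding T_def using a1 by auto
  have cc: "\<And>K. K \<subseteq> {1..r} \<Longrightarrow> card (({1..r} - K) \<inter> T) = card T - card (K \<inter> T)"
  proof -
    fix K assume K: "K \<subseteq> {1..r}"
    have "({1..r} - K) \<inter> T = T - (K \<inter> T)" using Tsub by blast
    moreover have "card (T - (K \<inter> T)) = card T - card (K \<inter> T)"
      by (rule card_Diff_subset) (auto simp: T_def)
    ultimately show "card (({1..r} - K) \<inter> T) = card T - card (K \<inter> T)" by simp
  qed
  have mainl: "\<And>K. K \<subseteq> {1..r} \<Longrightarrow> long_set r l K \<longleftrightarrow> m \<le> card (K \<inter> T)"
  proof -
    fix K assume K: "K \<subseteq> {1..r}"
    show "long_set r l K \<longleftrightarrow> m \<le> card (K \<inter> T)"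
    proof
      assume "long_set r l K"
      then show "m \<le> card (K \<inter> T)" using dom[OF K] longI[OF K] by fastforce
    next
      assume c: "m \<le> card (K \<inter> T)"
      have K': "{1..r} - K \<subseteq> {1..r}" by blast
      have "card (({1..r} - K) \<inter> T) \<le> m - 1" using cc[OF K] cT c by simp
      then have "2 * sum l ({1..r} - K) < tot" by (rule dom[OF K'])
      then show "long_set r l K" using longI[OF K] compl[OF K] by simp
    qed
  qed
  define z where "z = zero_one_lv r m"
  have zsum: "\<And>K. K \<subseteq> {1..r} \<Longrightarrow> sum z K = real (card (K \<inter> T))"
  proof -
    fix K assume K: "K \<subseteq> {1..r}"
    have finK: "finite K" using K finite_subset by blast
    have "sum z K = sum (\<lambda>i. if i \<in> T then 1 else 0) K"
      by (rule sum.cong) (use K ar in \<open>auto simp: z_def zero_one_lv_def T_def\<close>)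
    also have "\<dots> = sum (\<lambda>i. 1) (K \<inter> T)" using finK by (simp add: sum.If_cases)
    finally show "sum z K = real (card (K \<inter> T))" by simp
  qed
  have ztot: "sum z {1..r} = real (2*m - 1)" using zsum[of "{1..r}"] Tsub cT
    by (simp add: Int_absorb1)
  have zlong: "\<And>K. K \<subseteq> {1..r} \<Longrightarrow> long_set r z K \<longleftrightarrow> m \<le> card (K \<inter> T)"
  proof -
    fix K assume K: "K \<subseteq> {1..r}"
    have "long_set r z K \<longleftrightarrow> 2 * real (card (K \<inter> T)) > real (2*m - 1)"
      using long_iff_gen[OF K, of z] zsum[OF K] ztot by simp
    also have "\<dots> \<longleftrightarrow> 2 * card (K \<inter> T) > 2*m - 1" by linarith
    also have "\<dots> \<longleftrightarrow> m \<le> card (K \<inter> T)" using m1 by linarith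
    finally show "long_set r z K \<longleftrightarrow> m \<le> card (K \<inter> T)" .
  qed
  have zgen: "generic r z"
    unfolding generic_iff_gen
  proof (intro allI impI)
    fix K assume K: "K \<subseteq> {1..r}"
    have "2 * card (K \<inter> T) \<noteq> 2*m - 1" using m1 by presburger
    then have "2 * real (card (K \<inter> T)) \<noteq> real (2*m - 1)" by linarith
    then show "2 * sum z K \<noteq> sum z {1..r}" using zsum[OF K] ztot by simp
  qed
  show ?thesis unfolding equiv_lv_def m_def[symmetric] z_def[symmetric]
    using gen0 zgen mainl zlong by blast
qed

end
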